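(* Let $\mathrm{M}$ be a loopless matroid on a finite set $E$, $\mathcal{G}$ a building set of its lattice of flats $\mathcal{L}$, $\mathcal{M}$ an atom-free $\mathcal{G}$-compatible modular cut of $\mathcal{L}$, and $e\notin E$. Then \[ \mathrm{Tr}_{\mathcal{M}}(\mathcal{G})=(\mathcal{G}\cup_{\mathcal{M}}e)/e. \] In particular, $\mathrm{Tr}_{\mathcal{M}}(\mathcal{G})$ is a building set of $\mathrm{Tr}_{\mathcal{M}}(\mathrm{M})$.
   Context: Flats ordered by inclusion, $\hat0=\varnothing$, $F\vee G=\operatorname{cl}(F\cup G)$. A building set of a geometric lattice $\mathcal{L}$ is $\mathcal{G}\subseteq\mathcal{L}\setminus\{\hat0\}$ such that for each $F\neq\hat0$ the join map $\prod_{G\in\max\mathcal{G}_{\leqslant F}}[\hat0,G]\to[\hat0,F]$ is a poset isomorphism. A modular cut is an upward-closed set $\mathcal{M}$ of flats with $F\cap G\in\mathcal{M}$ whenever $F,G\in\mathcal{M}$ satisfy $\operatorname{rk}(F\vee G)+\operatorname{rk}(F\cap G)=\operatorname{rk}F+\operatorname{rk}G$; atom-free means it contains no rank-one flat; $\mathcal{G}$-compatible means its minimal elements lie in $\mathcal{G}$. The extension $\mathrm{M}\cup_{\mathcal{M}}e$ on $E\sqcup\{e\}$ has rank $\operatorname{rk}(S)=\operatorname{rk}_{\mathrm{M}}(S)$ and $\operatorname{rk}(S\sqcup\{e\})=\operatorname{rk}_{\mathrm{M}}(S)$ if $\operatorname{cl}_{\mathrm{M}}(S)\in\mathcal{M}$,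 else $\operatorname{rk}_{\mathrm{M}}(S)+1$ ($S\subseteq E$); $\mathcal{G}\cup_{\mathcal{M}}e=\{\operatorname{cl}_{\mathrm{M}\cup_{\mathcal{M}}e}(G):G\in\mathcal{G}\}\sqcup\{\{e\}\}$. The truncation $\mathrm{Tr}_{\mathcal{M}}(\mathrm{M})$ is the matroid on $E$ with rank $\operatorname{rk}_{\mathrm{M}}(S)-1$ if $\operatorname{cl}_{\mathrm{M}}(S)\in\mathcal{M}$ and $\operatorname{rk}_{\mathrm{M}}(S)$ otherwise; it equals the contraction $(\mathrm{M}\cup_{\mathcal{M}}e)/e$, whose flats are the sets $H\setminus\{e\}$ for flats $H\ni e$ of $\mathrm{M}\cup_{\mathcal{M}}e$. $\mathrm{Tr}_{\mathcal{M}}(\mathcal{G})=\mathcal{G}\cap\mathcal{L}(\mathrm{Tr}_{\mathcal{M}}(\mathrm{M}))$. For a building set $\mathcal{G}'$ of $\mathrm{M}\cup_{\mathcal{M}}e$, the contraction is $\mathcal{G}'/e=\{H\setminus\{e\}: H=\operatorname{cl}(G\cup\{e\})\text{ for some }G\in\mathcal{G}',\ H\neq\operatorname{cl}(\{e\})\}$, viewed as a set of flats of $(\mathrm{M}\cup_{\mathcal{M}}e)/e=\mathrm{Tr}_{\mathcal{M}}(\mathrm{M})$. *)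

theory Defs
  imports Main "HOL-Library.FuncSet"
begin

definition matroid :: "'a set \<Rightarrow> ('a set \<Rightarrow> nat) \<Rightarrow> bool" where
  "matroid E r \<longleftrightarrow> finite E
     \<and> (\<forall>X. X \<subseteq> E \<longrightarrow> r X \<le> card X)
     \<and> (\<forall>X Y. X \<subseteq> Y \<and> Y \<subseteq> E \<longrightarrow> r X \<le> r Y)
     \<and> (\<forall>X Y. X \<subseteq> E \<and> Y \<subseteq> E \<longrightarrow> r (X \<union> Y) + r (X \<inter> Y) \<le> r X + r Y)"

definition loopless :: "'a set \<Rightarrow> ('a set \<Rightarrow> nat) \<Rightarrow> bool" where
  "loopless E r \<longleftrightarrow> (\<forall>x\<in>E. r {x} = 1)"

definition cl :: "'a set \<Rightarrow> ('a set \<Rightarrow> nat) \<Rightarrow> 'a set \<Rightarrow> 'a set" where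
  "cl E r S = {x \<in> E. r (insert x S) = r S}"

definition flat :: "'a set \<Rightarrow> ('a set \<Rightarrow> nat) \<Rightarrow> 'a set \<Rightarrow> bool" where
  "flat E r F \<longleftrightarrow> F \<subseteq> E \<and> cl E r F = F"

definition flats :: "'a set \<Rightarrow> ('a set \<Rightarrow> nat) \<Rightarrow> 'a set set" where
  "flats E r = {F. flat E r F}"

definition bot_flat :: "'a set \<Rightarrow> ('a set \<Rightarrow> nat) \<Rightarrow> 'a set" where
  "bot_flat E r = cl E r {}"

definition maxG :: "'a set set \<Rightarrow> 'a set \<Rightarrow> 'a set set" where
  "maxG \<G> F = {G \<in> \<G>. G \<subseteq> F \<and> \<not> (\<exists>G'\<in>\<G>. G' \<subseteq> F \<and> G \<subset> G')}"

definition join_map :: "'a set \<Rightarrow> ('a set \<Rightarrow> nat) \<Rightarrow> ('a set \<Rightarrow> 'a set) \<Rightarrow> 'a set set \<Rightarrow> 'a set" where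
  "join_map E r x I = cl E r (\<Union>G\<in>I. x G)"

definition building_set :: "'a set \<Rightarrow> ('a set \<Rightarrow> nat) \<Rightarrow> 'a set set \<Rightarrow> bool" where
  "building_set E r \<G> \<longleftrightarrow>
     \<G> \<subseteq> flats E r - {bot_flat E r} \<and>
     (\<forall>F\<in>flats E r. F \<noteq> bot_flat E r \<longrightarrow>
        (let I = maxG \<G> F;
             P = PiE I (\<lambda>G. {H \<in> flats E r. H \<subseteq> G})
         in bij_betw (\<lambda>x. join_map E r x I) P {H \<in> flats E r. H \<subseteq> F}
            \<and> (\<forall>x\<in>P. \<forall>y\<in>P. (\<forall>G\<in>I. x G \<subseteq> y G) \<longleftrightarrow> join_map E r x I \<subseteq> join_map E r y I)))"

definition modular_cut :: "'a set \<Rightarrow> ('a set \<Rightarrow> nat) \<Rightarrow> 'a set set \<Rightarrow> bool" where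
  "modular_cut E r \<M> \<longleftrightarrow>
     \<M> \<subseteq> flats E r \<and>
     (\<forall>F\<in>\<M>. \<forall>G\<in>flats E r. F \<subseteq> G \<longrightarrow> G \<in> \<M>) \<and>
     (\<forall>F\<in>\<M>. \<forall>G\<in>\<M>. r (cl E r (F \<union> G)) + r (F \<inter> G) = r F + r G \<longrightarrow> F \<inter> G \<in> \<M>)"

definition atom_free :: "'a set \<Rightarrow> ('a set \<Rightarrow> nat) \<Rightarrow> 'a set set \<Rightarrow> bool" where
  "atom_free E r \<M> \<longleftrightarrow> (\<forall>F\<in>\<M>. r F \<noteq> 1)"

definition compatible :: "'a set set \<Rightarrow> 'a set set \<Rightarrow> bool" where
  "compatible \<G> \<M> \<longleftrightarrow> (\<forall>F\<in>\<M>. (\<forall>F'\<in>\<M>. \<not> F' \<subset> F) \<longrightarrow> F \<in> \<G>)"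

definition ext_rank :: "'a set \<Rightarrow> ('a set \<Rightarrow> nat) \<Rightarrow> 'a set set \<Rightarrow> 'a \<Rightarrow> 'a set \<Rightarrow> nat" where
  "ext_rank E r \<M> e S =
     (let T = S \<inter> E in
      if e \<in> S \<and> cl E r T \<notin> \<M> then r T + 1 else r T)"

definition ext_building :: "'a set \<Rightarrow> ('a set \<Rightarrow> nat) \<Rightarrow> 'a set set \<Rightarrow> 'a \<Rightarrow> 'a set set \<Rightarrow> 'a set set" where
  "ext_building E r \<M> e \<G> =
     (\<lambda>G. cl (insert e E) (ext_rank E r \<M> e) G) ` \<G> \<union> {{e}}"

definition trunc_rank :: "'a set \<Rightarrow> ('a set \<Rightarrow> nat) \<Rightarrow> 'a set set \<Rightarrow> 'a set \<Rightarrow> nat" where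
  "trunc_rank E r \<M> S = (if cl E r S \<in> \<M> then r S - 1 else r S)"

definition trunc_building :: "'a set \<Rightarrow> ('a set \<Rightarrow> nat) \<Rightarrow> 'a set set \<Rightarrow> 'a set set \<Rightarrow> 'a set set" where
  "trunc_building E r \<M> \<G> = \<G> \<inter> flats E (trunc_rank E r \<M>)"

definition contract_building :: "'a set \<Rightarrow> ('a set \<Rightarrow> nat) \<Rightarrow> 'a \<Rightarrow> 'a set set \<Rightarrow> 'a set set" where
  "contract_building E' r' e \<G>' =
     {H - {e} | H. (\<exists>G\<in>\<G>'. H = cl E' r' (G \<union> {e})) \<and> H \<noteq> cl E' r' {e}}"

end

theory Submission
  imports Defs
begin



locale mat = fixes E :: "'a set" and r :: "'a set \<Rightarrow> nat" assumes MM: "matroid E r"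
begin

abbreviation c where "c \<equiv> cl E r"

lemma finE: "finite E" using MM unfolding matroid_def by auto
lemma r_card: "X \<subseteq> E \<Longrightarrow> r X \<le> card X" using MM unfolding matroid_def by auto
lemma r_mono: "X \<subseteq> Y \<Longrightarrow> Y \<subseteq> E \<Longrightarrow> r X \<le> r Y" using MM unfolding matroid_def by auto
lemma r_sub: "X \<subseteq> E \<Longrightarrow> Y \<subseteq> E \<Longrightarrow> r (X \<union> Y) + r (X \<inter> Y) \<le> r X + r Y"
  using MM unfolding matroid_def by auto
lemma r_empty: "r {} = 0" using r_card[of "{}"] by simp
lemma r_single: "x \<in> E \<Longrightarrow> r {x} \<le> 1" using r_card[of "{x}"] by simp
lemma r_ins: assumes "X \<subseteq> E" "x \<in> E" shows "r (insert x X) \<le> r X + 1"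
proof -
  have "r (X \<union> {x}) + r (X \<inter> {x}) \<le> r X + r {x}" using r_sub[of X "{x}"] assms by auto
  thus ?thesis using r_single[OF assms(2)] by simp
qed
lemma r_ins_ge: "X \<subseteq> E \<Longrightarrow> x \<in> E \<Longrightarrow> r X \<le> r (insert x X)"
  by (rule r_mono) auto
lemma cl_E: "c X \<subseteq> E" by (auto simp: cl_def)
lemma cl_incl: "X \<subseteq> E \<Longrightarrow> X \<subseteq> c X" by (auto simp: cl_def insert_absorb)
lemma r_union_cl: assumes "X \<subseteq> E" "Y \<subseteq> c X" shows "r (X \<union> Y) = r X"
proof -
  have "finite Y" using assms(2) cl_E finE by (meson finite_subset)
  from this assms(2) show ?thesis
  proof (induction Y rule: finite_induct)
    case empty then show ?case by simp
  next
    case (insert y Y)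
    have yE: "y \<in> E" and yc: "r (insert y X) = r X" using insert.prems by (auto simp: cl_def)
    have IH: "r (X \<union> Y) = r X" using insert by auto
    have YE: "Y \<subseteq> E" using insert.prems cl_E by blast
    have eq: "(X \<union> Y) \<union> insert y X = X \<union> insert y Y" by auto
    have s: "r (X \<union> insert y Y) + r ((X \<union> Y) \<inter> insert y X) \<le> r (X \<union> Y) + r (insert y X)"
      using r_sub[of "X \<union> Y" "insert y X"] assms YE yE unfolding eq by auto
    have "r X \<le> r ((X \<union> Y) \<inter> insert y X)" by (rule r_mono) (use assms YE yE in auto)
    moreover have "r X \<le> r (X \<union> insert y Y)" by (rule r_mono) (use assms YE yE in auto)
    ultimately show ?case using s IH yc by linarith
  qed
qed
lemma r_cl: "X \<subseteq> E \<Longrightarrow> r (c X) = r X"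
  using r_union_cl[of X "c X"] cl_incl[of X] by (simp add: Un_absorb1)
lemma cl_mono: assumes "X \<subseteq> Y" "Y \<subseteq> E" shows "c X \<subseteq> c Y"
proof
  fix x assume "x \<in> c X"
  hence xE: "x \<in> E" and h: "r (insert x X) = r X" by (auto simp: cl_def)
  have eq: "Y \<union> insert x X = insert x Y" using assms by auto
  have s: "r (insert x Y) + r (Y \<inter> insert x X) \<le> r Y + r (insert x X)"
    using r_sub[of Y "insert x X"] assms xE unfolding eq by auto
  have "r X \<le> r (Y \<inter> insert x X)" by (rule r_mono) (use assms xE in auto)
  moreover have "r Y \<le> r (insert x Y)" using r_ins_ge assms xE by auto
  ultimately have "r (insert x Y) = r Y" using s h by linarith
  thus "x \<in> c Y" using xE by (auto simp: cl_def)
qed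
lemma cl_idem: assumes "X \<subseteq> E" shows "c (c X) = c X"
proof
  show "c X \<subseteq> c (c X)" using cl_incl cl_E by blast
  show "c (c X) \<subseteq> c X"
  proof
    fix x assume "x \<in> c (c X)"
    hence xE: "x \<in> E" and h: "r (insert x (c X)) = r (c X)" by (auto simp: cl_def)
    have "r (insert x X) \<le> r (insert x (c X))" by (rule r_mono) (use cl_incl assms cl_E xE in auto)
    moreover have "r X \<le> r (insert x X)" using r_ins_ge assms xE by auto
    ultimately have "r (insert x X) = r X" using h r_cl[OF assms] by linarith
    thus "x \<in> c X" using xE by (auto simp: cl_def)
  qed
qed
lemma flat_cl: "X \<subseteq> E \<Longrightarrow> flat E r (c X)" using cl_idem cl_E by (auto simp: flat_def)
lemma flatE: "flat E r F \<Longrightarrow> F \<subseteq> E" by (auto simp: flat_def)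
lemma flatC: "flat E r F \<Longrightarrow> c F = F" by (auto simp: flat_def)
lemma cl_le_flat: "flat E r F \<Longrightarrow> X \<subseteq> F \<Longrightarrow> c X \<subseteq> F"
  using cl_mono[of X F] by (auto simp: flat_def)
lemma flat_Int: assumes "flat E r F" "flat E r H" shows "flat E r (F \<inter> H)"
proof -
  have "c (F \<inter> H) \<subseteq> F \<inter> H" using cl_le_flat[OF assms(1)] cl_le_flat[OF assms(2)] by blast
  moreover have "F \<inter> H \<subseteq> c (F \<inter> H)" using cl_incl flatE[OF assms(1)] by blast
  ultimately show ?thesis using flatE[OF assms(1)] by (auto simp: flat_def)
qed
lemma r_ins_notin: assumes "X \<subseteq> E" "x \<in> E" "x \<notin> c X" shows "r (insert x X) = r X + 1"
proof -
  have "r (insert x X) \<noteq> r X" using assms by (auto simp: cl_def)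
  thus ?thesis using r_ins[OF assms(1,2)] r_ins_ge[OF assms(1,2)] by linarith
qed
lemma flat_eq: assumes "flat E r K" "flat E r K'" "K \<subseteq> K'" "r K' \<le> r K" shows "K = K'"
proof (rule ccontr)
  assume "K \<noteq> K'"
  then obtain x where x: "x \<in> K'" "x \<notin> K" using assms(3) by blast
  have xE: "x \<in> E" using x flatE[OF assms(2)] by blast
  have "r (insert x K) = r K + 1" using r_ins_notin[of K x] flatE[OF assms(1)] flatC[OF assms(1)] x xE by auto
  moreover have "r (insert x K) \<le> r K'" by (rule r_mono) (use x assms(3) flatE[OF assms(2)] in auto)
  ultimately show False using assms(4) by linarith
qed
lemma r_cover: assumes "flat E r F" "x \<in> E" "x \<notin> F" shows "r (c (insert x F)) = r F + 1"
  using r_cl[of "insert x F"] r_ins_notin[of F x] assms flatE flatC by auto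
lemma cover: assumes "flat E r F" "x \<in> E" "x \<notin> F" "flat E r W" "F \<subset> W" "W \<subseteq> c (insert x F)"
  shows "W = c (insert x F)"
proof (rule flat_eq)
  show "flat E r W" "flat E r (c (insert x F))" "W \<subseteq> c (insert x F)" using assms flat_cl flatE by auto
  obtain y where y: "y \<in> W" "y \<notin> F" using assms(5) by blast
  have yE: "y \<in> E" using y flatE[OF assms(4)] by blast
  have "r (insert y F) = r F + 1" using r_ins_notin[of F y] assms(1) flatE flatC y yE by auto
  moreover have "r (insert y F) \<le> r W" by (rule r_mono) (use y assms flatE in auto)
  ultimately show "r (c (insert x F)) \<le> r W" using r_cover[OF assms(1-3)] by linarith
qed
lemma cl_ins_cl: assumes "X \<subseteq> E" "x \<in> E" shows "c (insert x (c X)) = c (insert x X)"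
proof
  show "c (insert x X) \<subseteq> c (insert x (c X))" by (rule cl_mono) (use cl_incl assms cl_E in auto)
  have "insert x (c X) \<subseteq> c (insert x X)" using cl_incl[of "insert x X"] cl_mono[of X "insert x X"] assms by auto
  hence "c (insert x (c X)) \<subseteq> c (c (insert x X))" using cl_mono cl_E by blast
  thus "c (insert x (c X)) \<subseteq> c (insert x X)" using cl_idem[of "insert x X"] assms by auto
qed
lemma cl_ins_mem: assumes "X \<subseteq> E" "x \<in> c X" shows "c (insert x X) = c X"
proof -
  have "x \<in> E" using assms cl_E by blast
  hence "c (insert x X) = c (insert x (c X))" using cl_ins_cl assms by auto
  also have "insert x (c X) = c X" using assms by auto
  finally show ?thesis using cl_idem assms by auto
qed

end



locale main = mat E r for E :: "'a set" and r +
  fixes G M :: "'a set set"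
  assumes LL: "loopless E r" and BS: "building_set E r G" and MC: "modular_cut E r M"
    and AF: "atom_free E r M" and CP: "compatible G M"
begin

definition T where "T F = F \<union> {x\<in>E. F \<notin> M \<and> c (insert x F) \<in> M}"
definition tflat where "tflat H \<longleftrightarrow> flat E r H \<and> T H = H"

lemma r_one: "x \<in> E \<Longrightarrow> r {x} = 1" using LL by (auto simp: loopless_def)
lemma cl_empty: "c {} = {}"
  using r_one r_empty by (auto simp: cl_def)
lemma bot: "bot_flat E r = {}" using cl_empty by (simp add: bot_flat_def)
lemma flat_empty: "flat E r {}" using flat_cl[of "{}"] cl_empty by simp
lemma G_flat: "A \<in> G \<Longrightarrow> flat E r A" using BS by (auto simp: building_set_def flats_def)
lemma G_ne: "A \<in> G \<Longrightarrow> A \<noteq> {}" using BS bot by (auto simp: building_set_def)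
lemma M_flat: "F \<in> M \<Longrightarrow> flat E r F" using MC by (auto simp: modular_cut_def flats_def)
lemma M_up: "F \<in> M \<Longrightarrow> flat E r H \<Longrightarrow> F \<subseteq> H \<Longrightarrow> H \<in> M"
  using MC by (auto simp: modular_cut_def flats_def)
lemma M_mod: "F \<in> M \<Longrightarrow> H \<in> M \<Longrightarrow> r (c (F \<union> H)) + r (F \<inter> H) = r F + r H \<Longrightarrow> F \<inter> H \<in> M"
  using MC by (auto simp: modular_cut_def)
lemma empty_notin: "{} \<notin> M"
  using CP G_ne by (auto simp: compatible_def)
lemma M_rank: assumes "F \<in> M" shows "r F \<ge> 2"
proof -
  have "F \<noteq> {}" using assms empty_notin by auto
  then obtain x where x: "x \<in> F" by blast
  have FE: "F \<subseteq> E" using M_flat[OF assms] flatE by auto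
  have "r {x} \<le> r F" by (rule r_mono) (use x FE in auto)
  hence "r F \<ge> 1" using r_one x FE by auto
  moreover have "r F \<noteq> 1" using AF assms by (auto simp: atom_free_def)
  ultimately show ?thesis by linarith
qed
lemma finG: "finite G" 
proof -
  have "G \<subseteq> Pow E" using G_flat flatE by blast
  moreover have "finite (Pow E)" using finE by simp
  ultimately show ?thesis by (rule finite_subset)
qed
lemma finM: "finite M" 
proof -
  have "M \<subseteq> Pow E" using M_flat flatE by blast
  moreover have "finite (Pow E)" using finE by simp
  ultimately show ?thesis by (rule finite_subset)
qed
lemma min_M: assumes "K \<in> M" shows "\<exists>N\<in>M. N \<subseteq> K \<and> N \<in> G"
proof -
  let ?S = "{N \<in> M. N \<subseteq> K}"
  have "finite ?S" using finM by auto
  moreover have "?S \<noteq> {}" using assms by auto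
  ultimately obtain m where m: "m \<in> ?S" "\<forall>b\<in>?S. b \<le> m \<longrightarrow> m = b"
    using finite_has_minimal[of ?S] by meson
  have "\<forall>F'\<in>M. \<not> F' \<subset> m" using m by auto
  hence "m \<in> G" using CP m by (auto simp: compatible_def)
  thus ?thesis using m by auto
qed
lemma max_G: assumes "A \<in> G" "A \<subseteq> F" shows "\<exists>B\<in>maxG G F. A \<subseteq> B"
proof -
  let ?S = "{B \<in> G. A \<subseteq> B \<and> B \<subseteq> F}"
  have "finite ?S" using finG by auto
  moreover have "?S \<noteq> {}" using assms by auto
  ultimately obtain m where m: "m \<in> ?S" "\<forall>b\<in>?S. m \<le> b \<longrightarrow> m = b"
    using finite_has_maximal[of ?S] by meson
  have "\<not> (\<exists>G'\<in>G. G' \<subseteq> F \<and> m \<subset> G')"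
  proof
    assume "\<exists>G'\<in>G. G' \<subseteq> F \<and> m \<subset> G'"
    then obtain G' where "G' \<in> G" "G' \<subseteq> F" "m \<subset> G'" by blast
    moreover hence "G' \<in> ?S" using m(1) by auto
    ultimately show False using m(2) by blast
  qed
  hence "m \<in> maxG G F" using m(1) unfolding maxG_def by blast
  thus ?thesis using m by blast
qed
lemma maxG_sub: "A \<in> maxG G F \<Longrightarrow> A \<in> G \<and> A \<subseteq> F" by (auto simp: maxG_def)

abbreviation P where "P F \<equiv> PiE (maxG G F) (\<lambda>A. {H \<in> flats E r. H \<subseteq> A})"

lemma UP_E: "y \<in> P F \<Longrightarrow> (\<Union>A\<in>maxG G F. y A) \<subseteq> E"
  by (auto simp: flats_def flat_def)

lemma BS2: assumes "flat E r F" "F \<noteq> {}"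
  shows "bij_betw (\<lambda>x. join_map E r x (maxG G F)) (P F) {H \<in> flats E r. H \<subseteq> F}
     \<and> (\<forall>x\<in>P F. \<forall>y\<in>P F. (\<forall>G\<in>maxG G F. x G \<subseteq> y G) \<longleftrightarrow> join_map E r x (maxG G F) \<subseteq> join_map E r y (maxG G F))"
proof -
  have Fin: "F \<in> flats E r" using assms by (simp add: flats_def)
  have Fne: "F \<noteq> bot_flat E r" using assms bot by simp
  have all: "\<forall>F\<in>flats E r. F \<noteq> bot_flat E r \<longrightarrow> (let I = maxG G F;
             P = PiE I (\<lambda>G. {H \<in> flats E r. H \<subseteq> G})
         in bij_betw (\<lambda>x. join_map E r x I) P {H \<in> flats E r. H \<subseteq> F}
            \<and> (\<forall>x\<in>P. \<forall>y\<in>P. (\<forall>G\<in>I. x G \<subseteq> y G) \<longleftrightarrow> join_map E r x I \<subseteq> join_map E r y I))"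
    using BS unfolding building_set_def by (rule conjunct2)
  have "let I = maxG G F;
             P = PiE I (\<lambda>G. {H \<in> flats E r. H \<subseteq> G})
         in bij_betw (\<lambda>x. join_map E r x I) P {H \<in> flats E r. H \<subseteq> F}
            \<and> (\<forall>x\<in>P. \<forall>y\<in>P. (\<forall>G\<in>I. x G \<subseteq> y G) \<longleftrightarrow> join_map E r x I \<subseteq> join_map E r y I)"
    by (rule mp[OF bspec[OF all Fin] Fne])
  thus ?thesis unfolding Let_def .
qed

lemma T1: assumes "flat E r F" "F \<noteq> {}" "y \<in> P F" "A \<in> maxG G F"
  shows "c (\<Union>B\<in>maxG G F. y B) \<inter> A = y A"
proof -
  let ?I = "maxG G F"
  have ord: "\<forall>x\<in>P F. \<forall>y\<in>P F. (\<forall>G\<in>?I. x G \<subseteq> y G) \<longleftrightarrow> join_map E r x ?I \<subseteq> join_map E r y ?I"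
    using BS2[OF assms(1,2)] by (rule conjunct2)
  let ?U = "\<Union>B\<in>?I. y B"
  have UE: "?U \<subseteq> E" using UP_E assms by auto
  define z where "z = y(A := c ?U \<inter> A)"
  have yA: "y A \<in> flats E r" "y A \<subseteq> A" using PiE_mem[OF assms(3,4)] by auto
  have Af: "flat E r A" using G_flat maxG_sub assms(4) by auto
  have "c ?U \<inter> A \<in> {H \<in> flats E r. H \<subseteq> A}" using flat_Int[OF flat_cl[OF UE] Af] by (auto simp: flats_def)
  hence "z \<in> PiE (insert A ?I) (\<lambda>A. {H \<in> flats E r. H \<subseteq> A})" unfolding z_def
    by (rule PiE_fun_upd) (rule assms(3))
  hence zP: "z \<in> P F" using assms(4) by (simp add: insert_absorb)
  have "(\<Union>B\<in>?I. z B) \<subseteq> c ?U" using cl_incl[OF UE] by (auto simp: z_def)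
  hence "join_map E r z ?I \<subseteq> join_map E r y ?I"
    unfolding join_map_def by (rule cl_le_flat[OF flat_cl[OF UE]])
  hence "\<forall>G\<in>?I. z G \<subseteq> y G" using ord zP assms(3) by blast
  hence "z A \<subseteq> y A" using assms(4) by blast
  moreover have "y A \<subseteq> c ?U" using cl_incl[OF UE] assms(4) by auto
  ultimately show ?thesis using yA by (auto simp: z_def)
qed

lemma T2: assumes "flat E r F" "F \<noteq> {}" "flat E r H" "H \<subseteq> F"
  shows "c (\<Union>B\<in>maxG G F. H \<inter> B) = H"
proof -
  let ?I = "maxG G F"
  have "bij_betw (\<lambda>x. join_map E r x ?I) (P F) {H \<in> flats E r. H \<subseteq> F}"
    using BS2[OF assms(1,2)] by blast
  hence "H \<in> (\<lambda>x. join_map E r x ?I) ` P F" using assms unfolding bij_betw_def flats_def by auto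
  then obtain x where x: "x \<in> P F" "H = c (\<Union>B\<in>?I. x B)" by (auto simp: join_map_def)
  have UE: "(\<Union>B\<in>?I. x B) \<subseteq> E" using UP_E x by auto
  have xB: "x B \<subseteq> B" if "B \<in> ?I" for B using PiE_mem[OF x(1) that] by auto
  have xH: "x B \<subseteq> H" if "B \<in> ?I" for B using cl_incl[OF UE] x(2) that by blast
  have "(\<Union>B\<in>?I. x B) \<subseteq> (\<Union>B\<in>?I. H \<inter> B)" using xB xH by blast
  moreover have "(\<Union>B\<in>?I. H \<inter> B) \<subseteq> E" using flatE[OF assms(3)] by blast
  ultimately have "H \<subseteq> c (\<Union>B\<in>?I. H \<inter> B)" using x(2) cl_mono by simp
  moreover have "c (\<Union>B\<in>?I. H \<inter> B) \<subseteq> H" using cl_le_flat[OF assms(3)] by auto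
  ultimately show ?thesis by auto
qed

end



lemma mem_cl: "z \<in> cl E' r' S \<longleftrightarrow> z \<in> E' \<and> r' (insert z S) = r' S" by (simp add: cl_def)

context main begin

lemma T_incl: "F \<subseteq> T F" by (auto simp: T_def)
lemma T_sub: "flat E r F \<Longrightarrow> T F \<subseteq> E" using flatE by (auto simp: T_def)
lemma T_M: "F \<in> M \<Longrightarrow> T F = F" by (auto simp: T_def)
lemma tflat_M: "F \<in> M \<Longrightarrow> tflat F" using T_M M_flat by (simp add: tflat_def)
lemma memT: "x \<in> T F \<longleftrightarrow> x \<in> F \<or> (x \<in> E \<and> F \<notin> M \<and> c (insert x F) \<in> M)" by (auto simp: T_def)

lemma key: assumes "tflat H" "flat E r D" "D \<subseteq> H" "D \<notin> M" "x \<in> E" "x \<notin> D" "c (insert x D) \<in> M"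
  shows "x \<in> H"
proof (rule ccontr)
  assume xH: "x \<notin> H"
  have Hf: "flat E r H" and HT: "T H = H" using assms(1) by (auto simp: tflat_def)
  have HE: "H \<subseteq> E" using flatE[OF Hf] .
  have DE: "D \<subseteq> E" using flatE[OF assms(2)] .
  show False
  proof (cases "H \<in> M")
    case False
    have "c (insert x D) \<subseteq> c (insert x H)" by (rule cl_mono) (use assms HE in auto)
    hence "c (insert x H) \<in> M" using M_up[OF assms(7) flat_cl] HE assms(5) by auto
    hence "x \<in> T H" using False assms(5) by (simp add: memT)
    thus False using HT xH by simp
  next
    case True
    let ?C = "c (insert x D)"
    have CE: "?C \<subseteq> E" by (rule cl_E)
    have Cf: "flat E r ?C" using flat_cl DE assms(5) by auto
    have xC: "x \<in> ?C" using cl_incl[of "insert x D"] DE assms(5) by auto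
    have DC: "D \<subseteq> ?C" using cl_incl[of "insert x D"] DE assms(5) by auto
    have CH: "?C \<inter> H = D"
    proof (rule ccontr)
      assume "?C \<inter> H \<noteq> D"
      hence "D \<subset> ?C \<inter> H" using DC assms(3) by auto
      hence "?C \<inter> H = ?C" using cover[OF assms(2,5,6) flat_Int[OF Cf Hf]] by auto
      thus False using xC xH by auto
    qed
    have rC: "r ?C = r D + 1" using r_cover[OF assms(2,5,6)] .
    have "x \<notin> c H" using flatC[OF Hf] xH by simp
    hence rxH: "r (insert x H) = r H + 1" using r_ins_notin HE assms(5) by auto
    have CHsub: "?C \<union> H \<subseteq> c (insert x H)"
    proof -
      have "?C \<subseteq> c (insert x H)" by (rule cl_mono) (use assms HE in auto)
      moreover have "H \<subseteq> c (insert x H)" using cl_incl[of "insert x H"] HE assms(5) by auto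
      ultimately show ?thesis by auto
    qed
    have "r (?C \<union> H) \<le> r (c (insert x H))" by (rule r_mono[OF CHsub cl_E])
    moreover have "r (c (insert x H)) = r H + 1" using r_cl[of "insert x H"] rxH HE assms(5) by auto
    moreover have "r (insert x H) \<le> r (?C \<union> H)" by (rule r_mono) (use xC CE HE in auto)
    moreover have "r (c (?C \<union> H)) = r (?C \<union> H)" using r_cl CE HE by auto
    ultimately have "r (c (?C \<union> H)) + r (?C \<inter> H) = r ?C + r H" using rC rxH CH by simp
    hence "?C \<inter> H \<in> M" using M_mod[OF assms(7) True] by simp
    thus False using CH assms(4) by simp
  qed
qed

lemma T_cover: assumes "flat E r F" "F \<notin> M" "x \<in> E" "x \<notin> F" "c (insert x F) \<in> M"
  shows "T F = c (insert x F)"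
proof
  let ?C = "c (insert x F)"
  have FE: "F \<subseteq> E" using flatE[OF assms(1)] .
  show "T F \<subseteq> ?C"
  proof
    fix z assume z: "z \<in> T F"
    show "z \<in> ?C"
    proof (cases "z \<in> F")
      case True thus ?thesis using cl_incl[of "insert x F"] FE assms(3) by auto
    next
      case False
      hence "z \<in> E" "c (insert z F) \<in> M" using z by (auto simp: memT)
      thus ?thesis using key[OF tflat_M[OF assms(5)] assms(1) _ assms(2) _ False]
          cl_incl[of "insert x F"] FE assms(3) by auto
    qed
  qed
  show "?C \<subseteq> T F"
  proof
    fix z assume z: "z \<in> ?C"
    hence zE: "z \<in> E" using cl_E by blast
    show "z \<in> T F"
    proof (cases "z \<in> F")
      case True thus ?thesis by (simp add: memT)
    next
      case False
      have Cf: "flat E r ?C" using flat_cl FE assms(3) by auto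
      have "insert z F \<subseteq> ?C" using z cl_incl[of "insert x F"] FE assms(3) by auto
      hence W: "c (insert z F) \<subseteq> ?C" by (rule cl_le_flat[OF Cf])
      have "z \<in> c (insert z F)" using cl_incl[of "insert z F"] FE zE by auto
      moreover have "F \<subseteq> c (insert z F)" using cl_incl[of "insert z F"] FE zE by auto
      ultimately have "F \<subset> c (insert z F)" using False by auto
      moreover have "flat E r (c (insert z F))" using flat_cl FE zE by auto
      ultimately have "c (insert z F) = ?C" using cover[OF assms(1,3,4) _ _ W] by blast
      thus ?thesis using assms(2,5) zE by (simp add: memT)
    qed
  qed
qed

lemma T_cases: assumes "flat E r F"
  shows "T F = F \<or> (F \<notin> M \<and> (\<exists>x\<in>E. x \<notin> F \<and> c (insert x F) \<in> M \<and> T F = c (insert x F)))"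
proof (cases "T F = F")
  case False
  then obtain x where "x \<in> T F" "x \<notin> F" using T_incl by blast
  hence "x \<in> E" "F \<notin> M" "c (insert x F) \<in> M" by (auto simp: memT)
  thus ?thesis using T_cover[OF assms] \<open>x \<notin> F\<close> by blast
qed simp

lemma T_flat: assumes "flat E r F" shows "flat E r (T F)"
  using T_cases[OF assms]
proof
  assume "T F = F" thus ?thesis using assms by simp
next
  assume "F \<notin> M \<and> (\<exists>x\<in>E. x \<notin> F \<and> c (insert x F) \<in> M \<and> T F = c (insert x F))"
  hence "T F \<in> M" by auto
  thus ?thesis by (rule M_flat)
qed

lemma T_tflat: assumes "flat E r F" shows "tflat (T F)"
  using T_cases[OF assms]
proof
  assume "T F = F" thus ?thesis using assms by (simp add: tflat_def)
next
  assume "F \<notin> M \<and> (\<exists>x\<in>E. x \<notin> F \<and> c (insert x F) \<in> M \<and> T F = c (insert x F))"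
  hence "T F \<in> M" by auto
  thus ?thesis by (rule tflat_M)
qed

lemma tflat_Int: assumes "tflat H" "tflat A" shows "tflat (H \<inter> A)"
proof -
  have Hf: "flat E r H" and Af: "flat E r A" using assms by (auto simp: tflat_def)
  have Df: "flat E r (H \<inter> A)" by (rule flat_Int[OF Hf Af])
  have "T (H \<inter> A) \<subseteq> H \<inter> A"
  proof
    fix z assume z: "z \<in> T (H \<inter> A)"
    show "z \<in> H \<inter> A"
    proof (rule ccontr)
      assume zn: "z \<notin> H \<inter> A"
      hence h: "z \<in> E" "H \<inter> A \<notin> M" "c (insert z (H \<inter> A)) \<in> M" using z by (auto simp: memT)
      have "z \<in> H" by (rule key[OF assms(1) Df _ h(2) h(1) zn h(3)]) auto
      moreover have "z \<in> A" by (rule key[OF assms(2) Df _ h(2) h(1) zn h(3)]) auto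
      ultimately show False using zn by auto
    qed
  qed
  thus ?thesis using Df T_incl[of "H \<inter> A"] by (auto simp: tflat_def)
qed

lemma T_le: assumes "tflat F" "flat E r A" "A \<subseteq> F" shows "T A \<subseteq> F"
proof
  fix z assume z: "z \<in> T A"
  show "z \<in> F"
  proof (cases "z \<in> A")
    case True thus ?thesis using assms by auto
  next
    case False
    hence h: "z \<in> E" "A \<notin> M" "c (insert z A) \<in> M" using z by (auto simp: memT)
    show ?thesis by (rule key[OF assms(1,2,3) h(2) h(1) False h(3)])
  qed
qed

lemma T_empty: "T {} = {}"
proof -
  have "c {x} \<notin> M" if "x \<in> E" for x
  proof
    assume "c {x} \<in> M"
    hence "r (c {x}) \<ge> 2" by (rule M_rank)
    moreover have "r (c {x}) = 1" using r_cl[of "{x}"] r_one that by auto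
    ultimately show False by simp
  qed
  thus ?thesis by (auto simp: T_def)
qed

lemma tr_cl: assumes SE: "S \<subseteq> E" shows "cl E (trunc_rank E r M) S = T (c S)"
proof (rule set_eqI)
  fix z
  have TE: "T (c S) \<subseteq> E" using T_sub flat_cl SE by auto
  show "z \<in> cl E (trunc_rank E r M) S \<longleftrightarrow> z \<in> T (c S)"
  proof (cases "z \<in> E")
    case False thus ?thesis using TE by (auto simp: mem_cl)
  next
    case zE: True
    show ?thesis
    proof (cases "z \<in> c S")
      case True
      hence "r (insert z S) = r S" by (simp add: cl_def)
      moreover have "c (insert z S) = c S" by (rule cl_ins_mem[OF SE True])
      ultimately have "trunc_rank E r M (insert z S) = trunc_rank E r M S" by (simp add: trunc_rank_def)
      thus ?thesis unfolding mem_cl[of z E "trunc_rank E r M" S] memT[of z "c S"] using True zE by simp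
    next
      case False
      have ri: "r (insert z S) = r S + 1" by (rule r_ins_notin[OF SE zE False])
      have ci: "c (insert z (c S)) = c (insert z S)" by (rule cl_ins_cl[OF SE zE])
      have rcS: "c S \<in> M \<Longrightarrow> r S \<ge> 2" using M_rank r_cl[OF SE] by fastforce
      have "trunc_rank E r M (insert z S) = trunc_rank E r M S \<longleftrightarrow> (c S \<notin> M \<and> c (insert z S) \<in> M)"
        unfolding trunc_rank_def using ri rcS by auto
      thus ?thesis unfolding mem_cl[of z E "trunc_rank E r M" S] memT[of z "c S"] using False zE ci by simp
    qed
  qed
qed

lemma flats_tr: "flats E (trunc_rank E r M) = {H. tflat H}"
proof (rule set_eqI)
  fix H
  show "H \<in> flats E (trunc_rank E r M) \<longleftrightarrow> H \<in> {H. tflat H}"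
  proof
    assume "H \<in> flats E (trunc_rank E r M)"
    hence HE: "H \<subseteq> E" and h0: "cl E (trunc_rank E r M) H = H" unfolding flats_def flat_def by auto
    have h: "T (c H) = H" using h0 tr_cl[OF HE] by simp
    have "H \<subseteq> c H" using cl_incl HE by auto
    moreover have "c H \<subseteq> T (c H)" by (rule T_incl)
    ultimately have "c H = H" using h by auto
    thus "H \<in> {H. tflat H}" using h HE by (simp add: tflat_def flat_def)
  next
    assume "H \<in> {H. tflat H}"
    hence h: "flat E r H" "T H = H" by (auto simp: tflat_def)
    have "cl E (trunc_rank E r M) H = H" using tr_cl[OF flatE[OF h(1)]] flatC[OF h(1)] h(2) by simp
    thus "H \<in> flats E (trunc_rank E r M)" using flatE[OF h(1)] unfolding flats_def flat_def by simp
  qed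
qed

end



context main begin

lemma T_G: assumes "A \<in> G" shows "T A \<in> G"
proof -
  have Af: "flat E r A" by (rule G_flat[OF assms])
  have AE: "A \<subseteq> E" by (rule flatE[OF Af])
  from T_cases[OF Af] show ?thesis
  proof
    assume "T A = A" thus ?thesis using assms by simp
  next
    assume "A \<notin> M \<and> (\<exists>x\<in>E. x \<notin> A \<and> c (insert x A) \<in> M \<and> T A = c (insert x A))"
    then obtain x where AM: "A \<notin> M" and x: "x \<in> E" "x \<notin> A" "c (insert x A) \<in> M" "T A = c (insert x A)"
      by blast
    define Gp where "Gp = c (insert x A)"
    have Gpf: "flat E r Gp" unfolding Gp_def using flat_cl AE x(1) by auto
    have AGp: "A \<subseteq> Gp" and xGp: "x \<in> Gp" unfolding Gp_def using cl_incl[of "insert x A"] AE x(1) by auto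
    have Gpne: "Gp \<noteq> {}" using xGp by auto
    have GpM: "Gp \<in> M" using x(3) Gp_def by simp
    show "T A \<in> G"
    proof (rule ccontr)
      assume "T A \<notin> G"
      hence GpnG: "Gp \<notin> G" using x(4) Gp_def by simp
      let ?I = "maxG G Gp"
      obtain N where N: "N \<in> M" "N \<subseteq> Gp" "N \<in> G" using min_M[OF GpM] by auto
      obtain Aa where Aa: "Aa \<in> ?I" "N \<subseteq> Aa" using max_G[OF N(3) N(2)] by auto
      have AaG: "Aa \<in> G" "Aa \<subseteq> Gp" using maxG_sub[OF Aa(1)] by auto
      have Aaf: "flat E r Aa" by (rule G_flat[OF AaG(1)])
      have AaM: "Aa \<in> M" by (rule M_up[OF N(1) Aaf Aa(2)])
      obtain B where B: "B \<in> ?I" "A \<subseteq> B" using max_G[OF assms AGp] by auto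
      have BG: "B \<in> G" "B \<subseteq> Gp" using maxG_sub[OF B(1)] by auto
      have "B = A"
      proof (rule ccontr)
        assume "B \<noteq> A" hence "A \<subset> B" using B(2) by auto
        hence "B = Gp" using cover[OF Af x(1) x(2) G_flat[OF BG(1)]] BG(2) Gp_def by auto
        thus False using BG(1) GpnG by simp
      qed
      hence AI: "A \<in> ?I" using B(1) by simp
      have AaA: "Aa \<noteq> A" using AaM AM by auto
      define y1 where "y1 = (\<lambda>C\<in>?I. if C = Aa then Aa else {})"
      have y1P: "y1 \<in> P Gp" unfolding y1_def restrict_PiE_iff
        using flat_empty Aaf by (auto simp: flats_def)
      have U1: "(\<Union>C\<in>?I. y1 C) = Aa" using Aa(1) by (auto simp: y1_def)
      have "c Aa \<inter> A = y1 A" using T1[OF Gpf Gpne y1P AI] U1 by simp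
      hence disj: "Aa \<inter> A = {}" using flatC[OF Aaf] AaA AI by (simp add: y1_def)
      have "Aa \<noteq> {}" using AaM empty_notin by auto
      then obtain a where a: "a \<in> Aa" by auto
      have aE: "a \<in> E" using a flatE[OF Aaf] by auto
      let ?Ap = "c {a}"
      have Apf: "flat E r ?Ap" using flat_cl aE by auto
      have ApAa: "?Ap \<subseteq> Aa" using cl_le_flat[OF Aaf] a by auto
      have aAp: "a \<in> ?Ap" using cl_incl[of "{a}"] aE by auto
      define y2 where "y2 = (\<lambda>C\<in>?I. if C = Aa then ?Ap else if C = A then A else {})"
      define y3 where "y3 = (\<lambda>C\<in>?I. if C = Aa then Aa else if C = A then A else {})"
      have y2P: "y2 \<in> P Gp" unfolding y2_def restrict_PiE_iff
        using flat_empty Aaf Apf ApAa Af by (auto simp: flats_def)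
      have y3P: "y3 \<in> P Gp" unfolding y3_def restrict_PiE_iff
        using flat_empty Aaf Af by (auto simp: flats_def)
      have U2: "(\<Union>C\<in>?I. y2 C) = ?Ap \<union> A" using Aa(1) AI AaA by (auto simp: y2_def)
      have U3: "(\<Union>C\<in>?I. y3 C) = Aa \<union> A" using Aa(1) AI AaA by (auto simp: y3_def)
      have cov: "c (X \<union> A) = Gp" if X: "X \<subseteq> Aa" "a \<in> X" for X
      proof -
        have XE: "X \<union> A \<subseteq> E" using X flatE[OF Aaf] AE by auto
        have "A \<subset> c (X \<union> A)" using cl_incl[OF XE] X disj a by auto
        moreover have "c (X \<union> A) \<subseteq> Gp" using cl_le_flat[OF Gpf] X AaG(2) AGp by auto
        ultimately show ?thesis using cover[OF Af x(1) x(2) flat_cl[OF XE]] Gp_def by auto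
      qed
      have "Gp \<inter> Aa = ?Ap" using T1[OF Gpf Gpne y2P Aa(1)] U2 cov[OF ApAa aAp] by (simp add: y2_def Aa(1))
      moreover have "Gp \<inter> Aa = Aa" using T1[OF Gpf Gpne y3P Aa(1)] U3 cov[OF _ a] by (simp add: y3_def Aa(1))
      ultimately have "Aa = ?Ap" by simp
      hence "r Aa = 1" using r_cl[of "{a}"] r_one aE by simp
      thus False using AF AaM by (auto simp: atom_free_def)
    qed
  qed
qed

lemma maxG_tflat: assumes "tflat F" "A \<in> maxG G F" shows "tflat A"
proof -
  have A: "A \<in> G" "A \<subseteq> F" "\<not> (\<exists>G'\<in>G. G' \<subseteq> F \<and> A \<subset> G')" using assms(2) by (auto simp: maxG_def)
  have Af: "flat E r A" by (rule G_flat[OF A(1)])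
  have "T A \<in> G" by (rule T_G[OF A(1)])
  moreover have "T A \<subseteq> F" by (rule T_le[OF assms(1) Af A(2)])
  moreover have "A \<subseteq> T A" by (rule T_incl)
  ultimately have "T A = A" using A(3) by blast
  thus ?thesis using Af by (simp add: tflat_def)
qed

lemma maxG_eq: assumes "tflat F" shows "maxG {A\<in>G. tflat A} F = maxG G F"
proof (rule set_eqI)
  fix B
  show "B \<in> maxG {A\<in>G. tflat A} F \<longleftrightarrow> B \<in> maxG G F"
  proof
    assume "B \<in> maxG G F"
    thus "B \<in> maxG {A\<in>G. tflat A} F" using maxG_tflat[OF assms] by (auto simp: maxG_def)
  next
    assume Bm: "B \<in> maxG {A\<in>G. tflat A} F"
    hence B: "B \<in> G" "B \<subseteq> F" by (auto simp: maxG_def)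
    obtain A where A: "A \<in> maxG G F" "B \<subseteq> A" using max_G[OF B] by auto
    have "tflat A" by (rule maxG_tflat[OF assms A(1)])
    moreover have "A \<in> G" "A \<subseteq> F" using A(1) by (auto simp: maxG_def)
    ultimately have "\<not> B \<subset> A" using Bm by (auto simp: maxG_def)
    hence "B = A" using A(2) by auto
    thus "B \<in> maxG G F" using A(1) by simp
  qed
qed

lemma main_claim: assumes "tflat F" "F \<noteq> {}" "y \<in> PiE (maxG G F) (\<lambda>A. {H. tflat H \<and> H \<subseteq> A})"
  shows "T (c (\<Union>A\<in>maxG G F. y A)) = c (\<Union>A\<in>maxG G F. y A)"
proof (rule ccontr)
  let ?I = "maxG G F"
  let ?U = "\<Union>A\<in>?I. y A"
  define K where "K = c ?U"
  have Ff: "flat E r F" using assms(1) by (simp add: tflat_def)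
  have sub: "{H. tflat H \<and> H \<subseteq> A} \<subseteq> {H \<in> flats E r. H \<subseteq> A}" for A by (auto simp: tflat_def flats_def)
  have yP: "y \<in> P F" using assms(3) PiE_mono[of ?I "\<lambda>A. {H. tflat H \<and> H \<subseteq> A}" "\<lambda>A. {H \<in> flats E r. H \<subseteq> A}", OF sub]
    by blast
  have ytf: "tflat (y A)" "y A \<subseteq> A" if "A \<in> ?I" for A using PiE_mem[OF assms(3) that] by auto
  have UE: "?U \<subseteq> E" by (rule UP_E[OF yP])
  have Kf: "flat E r K" unfolding K_def by (rule flat_cl[OF UE])
  have UF: "?U \<subseteq> F"
  proof (rule UN_least)
    fix A assume "A \<in> ?I" thus "y A \<subseteq> F" using ytf(2) maxG_sub by blast
  qed
  have KF: "K \<subseteq> F" unfolding K_def by (rule cl_le_flat[OF Ff UF])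
  have UK: "?U \<subseteq> K" unfolding K_def by (rule cl_incl[OF UE])
  assume "T (c ?U) \<noteq> c ?U"
  hence "T K \<noteq> K" by (simp add: K_def)
  with T_cases[OF Kf] obtain x0 where KM: "K \<notin> M" and x0: "x0 \<in> E" "x0 \<notin> K" "c (insert x0 K) \<in> M"
    "T K = c (insert x0 K)" by blast
  define Kp where "Kp = c (insert x0 K)"
  have KE: "K \<subseteq> E" by (rule flatE[OF Kf])
  have KpF: "Kp \<subseteq> F" using T_le[OF assms(1) Kf KF] x0(4) Kp_def by simp
  have Kpf: "flat E r Kp" unfolding Kp_def using flat_cl KE x0(1) by auto
  have KKp: "K \<subseteq> Kp" unfolding Kp_def using cl_incl[of "insert x0 K"] KE x0(1) by auto
  have KpM: "Kp \<in> M" using x0(3) Kp_def by simp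
  obtain N where N: "N \<in> M" "N \<subseteq> Kp" "N \<in> G" using min_M[OF KpM] by auto
  have "N \<subseteq> F" using N(2) KpF by blast
  then obtain A0 where A0: "A0 \<in> ?I" "N \<subseteq> A0" using max_G[OF N(3)] by blast
  have A0f: "flat E r A0" using G_flat maxG_sub A0(1) by auto
  define W0 where "W0 = Kp \<inter> A0"
  have W0f: "flat E r W0" unfolding W0_def by (rule flat_Int[OF Kpf A0f])
  have W0M: "W0 \<in> M" using M_up[OF N(1) W0f] N(2) A0(2) W0_def by auto
  have yA0K: "y A0 \<subseteq> K" using UK A0(1) by auto
  have yA0M: "y A0 \<notin> M"
  proof
    assume "y A0 \<in> M" hence "K \<in> M" using M_up[OF _ Kf yA0K] by auto
    thus False using KM by simp
  qed
  have yW0: "y A0 \<subseteq> W0" using yA0K KKp ytf(2)[OF A0(1)] W0_def by auto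
  have "y A0 \<noteq> W0" using yA0M W0M by auto
  then obtain x where x: "x \<in> W0" "x \<notin> y A0" using yW0 by auto
  have xE: "x \<in> E" using x(1) flatE[OF W0f] by auto
  have yA0f: "flat E r (y A0)" using ytf(1)[OF A0(1)] by (simp add: tflat_def)
  have yA0E: "y A0 \<subseteq> E" by (rule flatE[OF yA0f])
  define W where "W = c (insert x (y A0))"
  have Wf: "flat E r W" unfolding W_def using flat_cl yA0E xE by auto
  have WW0: "W \<subseteq> W0" unfolding W_def by (rule cl_le_flat[OF W0f]) (use x yW0 in auto)
  have WA0: "W \<subseteq> A0" using WW0 W0_def by auto
  have yW: "y A0 \<subseteq> W" and xW: "x \<in> W" unfolding W_def using cl_incl[of "insert x (y A0)"] yA0E xE by auto
  define w where "w = y(A0 := W)"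
  have "W \<in> {H \<in> flats E r. H \<subseteq> A0}" using Wf WA0 by (simp add: flats_def)
  hence "w \<in> PiE (insert A0 ?I) (\<lambda>A. {H \<in> flats E r. H \<subseteq> A})" unfolding w_def
    by (rule PiE_fun_upd) (rule yP)
  hence wP: "w \<in> P F" using A0(1) by (simp add: insert_absorb)
  let ?Uw = "\<Union>A\<in>?I. w A"
  have UwE: "?Uw \<subseteq> E" by (rule UP_E[OF wP])
  have "?U \<subseteq> ?Uw" using yW by (auto simp: w_def)
  hence K1: "K \<subseteq> c ?Uw" unfolding K_def by (rule cl_mono[OF _ UwE])
  have "x \<in> ?Uw" using xW A0(1) by (auto simp: w_def)
  hence K2: "x \<in> c ?Uw" using cl_incl[OF UwE] by auto
  have "K \<inter> A0 = y A0" using T1[OF Ff assms(2) yP A0(1)] K_def by simp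
  moreover have "x \<in> A0" using x(1) W0_def by auto
  ultimately have xK: "x \<notin> K" using x(2) by auto
  have "?Uw \<subseteq> Kp"
  proof
    fix z assume "z \<in> ?Uw"
    then obtain B where B: "B \<in> ?I" "z \<in> w B" by auto
    show "z \<in> Kp"
    proof (cases "B = A0")
      case True thus ?thesis using B WW0 W0_def by (auto simp: w_def)
    next
      case False thus ?thesis using B UK KKp by (auto simp: w_def)
    qed
  qed
  hence "c ?Uw \<subseteq> Kp" by (rule cl_le_flat[OF Kpf])
  moreover have "K \<subset> c ?Uw" using K1 K2 xK by auto
  ultimately have "c ?Uw = Kp" using cover[OF Kf x0(1) x0(2) flat_cl[OF UwE]] Kp_def by auto
  hence "Kp \<inter> A0 = W" using T1[OF Ff assms(2) wP A0(1)] by (simp add: w_def)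
  hence "W \<in> M" using W0M W0_def by simp
  hence "x \<in> T (y A0)" using yA0M xE W_def by (simp add: memT)
  thus False using ytf(1)[OF A0(1)] x(2) by (simp add: tflat_def)
qed

end



context main begin

lemma bot_tr: "bot_flat E (trunc_rank E r M) = {}"
  unfolding bot_flat_def using tr_cl[of "{}"] cl_empty T_empty by simp

lemma TG_eq: "trunc_building E r M G = {A\<in>G. tflat A}"
  by (auto simp: trunc_building_def flats_tr)

lemma part2_F: assumes Ft: "tflat F" and Fne: "F \<noteq> {}"
  shows "bij_betw (\<lambda>x. join_map E (trunc_rank E r M) x (maxG G F))
            (PiE (maxG G F) (\<lambda>A. {H \<in> flats E (trunc_rank E r M). H \<subseteq> A}))
            {H \<in> flats E (trunc_rank E r M). H \<subseteq> F}
    \<and> (\<forall>x\<in>PiE (maxG G F) (\<lambda>A. {H \<in> flats E (trunc_rank E r M). H \<subseteq> A}).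
       \<forall>y\<in>PiE (maxG G F) (\<lambda>A. {H \<in> flats E (trunc_rank E r M). H \<subseteq> A}).
        (\<forall>B\<in>maxG G F. x B \<subseteq> y B) \<longleftrightarrow>
          join_map E (trunc_rank E r M) x (maxG G F) \<subseteq> join_map E (trunc_rank E r M) y (maxG G F))"
proof -
  let ?I = "maxG G F"
  let ?Q = "PiE ?I (\<lambda>A. {H \<in> flats E (trunc_rank E r M). H \<subseteq> A})"
  let ?j = "\<lambda>x. join_map E (trunc_rank E r M) x ?I"
  have Ff: "flat E r F" using Ft by (simp add: tflat_def)
  have Qeq: "{H \<in> flats E (trunc_rank E r M). H \<subseteq> A} = {H. tflat H \<and> H \<subseteq> A}" for A
    using flats_tr by auto
  have Qeq2: "?Q = PiE ?I (\<lambda>A. {H. tflat H \<and> H \<subseteq> A})" by (simp only: Qeq)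
  have sub: "{H. tflat H \<and> H \<subseteq> A} \<subseteq> {H \<in> flats E r. H \<subseteq> A}" for A by (auto simp: tflat_def flats_def)
  have QP: "x \<in> P F" if "x \<in> ?Q" for x
    using that PiE_mono[of ?I "\<lambda>A. {H. tflat H \<and> H \<subseteq> A}" "\<lambda>A. {H \<in> flats E r. H \<subseteq> A}", OF sub]
    unfolding Qeq2 by blast
  have jm: "?j x = c (\<Union>A\<in>?I. x A)" if x: "x \<in> ?Q" for x
  proof -
    have "?j x = T (c (\<Union>A\<in>?I. x A))" unfolding join_map_def by (rule tr_cl[OF UP_E[OF QP[OF x]]])
    also have "\<dots> = c (\<Union>A\<in>?I. x A)" by (rule main_claim[OF Ft Fne]) (use x Qeq2 in simp)
    finally show ?thesis .
  qed
  have T1': "c (\<Union>A\<in>?I. x A) \<inter> B = x B" if "x \<in> ?Q" "B \<in> ?I" for x B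
    by (rule T1[OF Ff Fne QP[OF that(1)] that(2)])
  have bij: "bij_betw ?j ?Q {H \<in> flats E (trunc_rank E r M). H \<subseteq> F}"
  proof (rule bij_betwI')
    fix x y assume x: "x \<in> ?Q" and y: "y \<in> ?Q"
    show "(?j x = ?j y) = (x = y)"
    proof
      assume eq: "?j x = ?j y"
      show "x = y"
      proof (rule PiE_ext[OF x y])
        fix A assume A: "A \<in> ?I"
        have "x A = c (\<Union>A\<in>?I. x A) \<inter> A" using T1'[OF x A] by simp
        also have "\<dots> = c (\<Union>A\<in>?I. y A) \<inter> A" using eq jm[OF x] jm[OF y] by simp
        also have "\<dots> = y A" using T1'[OF y A] by simp
        finally show "x A = y A" .
      qed
    qed simp
  next
    fix x assume x: "x \<in> ?Q"
    have UE: "(\<Union>A\<in>?I. x A) \<subseteq> E" by (rule UP_E[OF QP[OF x]])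
    have "tflat (T (c (\<Union>A\<in>?I. x A)))" by (rule T_tflat[OF flat_cl[OF UE]])
    hence t: "tflat (?j x)" using jm[OF x] main_claim[OF Ft Fne] x Qeq2 by simp
    have "(\<Union>A\<in>?I. x A) \<subseteq> F"
    proof (rule UN_least)
      fix A assume A: "A \<in> ?I"
      hence "x A \<subseteq> A" using PiE_mem[OF x A] by simp
      thus "x A \<subseteq> F" using maxG_sub[OF A] by blast
    qed
    hence "c (\<Union>A\<in>?I. x A) \<subseteq> F" by (rule cl_le_flat[OF Ff])
    thus "?j x \<in> {H \<in> flats E (trunc_rank E r M). H \<subseteq> F}" using t jm[OF x] flats_tr by simp
  next
    fix H assume "H \<in> {H \<in> flats E (trunc_rank E r M). H \<subseteq> F}"
    hence Ht: "tflat H" and HF: "H \<subseteq> F" using flats_tr by auto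
    have Hf: "flat E r H" using Ht by (simp add: tflat_def)
    define x where "x = (\<lambda>B\<in>?I. H \<inter> B)"
    have "\<forall>B\<in>?I. H \<inter> B \<in> {H. tflat H \<and> H \<subseteq> B}"
      using tflat_Int[OF Ht maxG_tflat[OF Ft]] by auto
    hence xQ: "x \<in> ?Q" unfolding Qeq2 x_def restrict_PiE_iff .
    have "?j x = c (\<Union>B\<in>?I. x B)" by (rule jm[OF xQ])
    also have "(\<Union>B\<in>?I. x B) = (\<Union>B\<in>?I. H \<inter> B)" by (simp add: x_def)
    also have "c (\<Union>B\<in>?I. H \<inter> B) = H" by (rule T2[OF Ff Fne Hf HF])
    finally show "\<exists>x\<in>?Q. H = ?j x" using xQ by metis
  qed
  have ord1: "(\<forall>B\<in>?I. x B \<subseteq> y B) \<longleftrightarrow> ?j x \<subseteq> ?j y" if x: "x \<in> ?Q" and y: "y \<in> ?Q" for x y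
  proof
    assume "\<forall>B\<in>?I. x B \<subseteq> y B"
    hence "(\<Union>A\<in>?I. x A) \<subseteq> (\<Union>A\<in>?I. y A)" by blast
    hence "c (\<Union>A\<in>?I. x A) \<subseteq> c (\<Union>A\<in>?I. y A)" by (rule cl_mono[OF _ UP_E[OF QP[OF y]]])
    thus "?j x \<subseteq> ?j y" using jm[OF x] jm[OF y] by simp
  next
    assume le: "?j x \<subseteq> ?j y"
    show "\<forall>B\<in>?I. x B \<subseteq> y B"
    proof
      fix B assume B: "B \<in> ?I"
      have "x B = c (\<Union>A\<in>?I. x A) \<inter> B" using T1'[OF x B] by simp
      also have "\<dots> \<subseteq> c (\<Union>A\<in>?I. y A) \<inter> B" using le jm[OF x] jm[OF y] by auto
      also have "\<dots> = y B" using T1'[OF y B] by simp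
      finally show "x B \<subseteq> y B" .
    qed
  qed
  have ord: "\<forall>x\<in>?Q. \<forall>y\<in>?Q. (\<forall>B\<in>?I. x B \<subseteq> y B) \<longleftrightarrow> ?j x \<subseteq> ?j y"
    using ord1 by blast
  show ?thesis using bij ord by blast
qed

lemma part2: "building_set E (trunc_rank E r M) (trunc_building E r M G)"
proof -
  have A: "trunc_building E r M G \<subseteq> flats E (trunc_rank E r M) - {bot_flat E (trunc_rank E r M)}"
    using TG_eq flats_tr bot_tr G_ne by auto
  have B: "\<forall>F\<in>flats E (trunc_rank E r M). F \<noteq> bot_flat E (trunc_rank E r M) \<longrightarrow>
        (let I = maxG (trunc_building E r M G) F;
             P = PiE I (\<lambda>A. {H \<in> flats E (trunc_rank E r M). H \<subseteq> A})
         in bij_betw (\<lambda>x. join_map E (trunc_rank E r M) x I) P {H \<in> flats E (trunc_rank E r M). H \<subseteq> F}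
            \<and> (\<forall>x\<in>P. \<forall>y\<in>P. (\<forall>B\<in>I. x B \<subseteq> y B) \<longleftrightarrow> join_map E (trunc_rank E r M) x I \<subseteq> join_map E (trunc_rank E r M) y I))"
  proof (intro ballI impI)
    fix F assume F1: "F \<in> flats E (trunc_rank E r M)" and F2: "F \<noteq> bot_flat E (trunc_rank E r M)"
    have Ft: "tflat F" using F1 flats_tr by auto
    have Fne: "F \<noteq> {}" using F2 bot_tr by simp
    have Ieq: "maxG (trunc_building E r M G) F = maxG G F" using maxG_eq[OF Ft] TG_eq by simp
    show "let I = maxG (trunc_building E r M G) F;
             P = PiE I (\<lambda>A. {H \<in> flats E (trunc_rank E r M). H \<subseteq> A})
         in bij_betw (\<lambda>x. join_map E (trunc_rank E r M) x I) P {H \<in> flats E (trunc_rank E r M). H \<subseteq> F}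
            \<and> (\<forall>x\<in>P. \<forall>y\<in>P. (\<forall>B\<in>I. x B \<subseteq> y B) \<longleftrightarrow> join_map E (trunc_rank E r M) x I \<subseteq> join_map E (trunc_rank E r M) y I)"
      unfolding Let_def Ieq by (rule part2_F[OF Ft Fne])
  qed
  show ?thesis unfolding building_set_def using A B by blast
qed

lemma part1: "trunc_building E r M G = T ` G"
proof
  show "trunc_building E r M G \<subseteq> T ` G"
  proof
    fix A assume "A \<in> trunc_building E r M G"
    hence "A \<in> G" "T A = A" using TG_eq by (auto simp: tflat_def)
    thus "A \<in> T ` G" by (metis image_eqI)
  qed
  show "T ` G \<subseteq> trunc_building E r M G"
    using TG_eq T_G T_tflat G_flat by auto
qed

lemma er1: assumes "e \<notin> E" "X \<subseteq> E" shows "ext_rank E r M e X = r X"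
proof -
  have "X \<inter> E = X" "e \<notin> X" using assms by auto
  thus ?thesis by (simp add: ext_rank_def Let_def)
qed

lemma er2: assumes "e \<notin> E" "X \<subseteq> E"
  shows "ext_rank E r M e (insert e X) = (if c X \<in> M then r X else r X + 1)"
proof -
  have "insert e X \<inter> E = X" using assms by auto
  thus ?thesis by (simp add: ext_rank_def Let_def)
qed

lemma ext_cl: assumes eE: "e \<notin> E" and SE: "S \<subseteq> E"
  shows "cl (insert e E) (ext_rank E r M e) (insert e S) = insert e (T (c S))"
proof (rule set_eqI)
  fix z
  let ?r = "ext_rank E r M e"
  have TE: "T (c S) \<subseteq> E" using T_sub flat_cl SE by auto
  show "z \<in> cl (insert e E) ?r (insert e S) \<longleftrightarrow> z \<in> insert e (T (c S))"
  proof (cases "z = e")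
    case True thus ?thesis by (simp add: mem_cl insert_absorb)
  next
    case ze: False
    show ?thesis
    proof (cases "z \<in> E")
      case False thus ?thesis using TE ze by (auto simp: mem_cl)
    next
      case zE: True
      have zSE: "insert z S \<subseteq> E" using zE SE by auto
      have ins: "insert z (insert e S) = insert e (insert z S)" by auto
      have eq1: "?r (insert z (insert e S)) = (if c (insert z S) \<in> M then r (insert z S) else r (insert z S) + 1)"
        unfolding ins by (rule er2[OF eE zSE])
      have eq2: "?r (insert e S) = (if c S \<in> M then r S else r S + 1)" by (rule er2[OF eE SE])
      have lhs: "z \<in> cl (insert e E) ?r (insert e S) \<longleftrightarrow> ?r (insert z (insert e S)) = ?r (insert e S)"
        using zE by (simp add: mem_cl)
      show ?thesis
      proof (cases "z \<in> c S")
        case True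
        hence "r (insert z S) = r S" by (simp add: cl_def)
        moreover have "c (insert z S) = c S" by (rule cl_ins_mem[OF SE True])
        ultimately have "?r (insert z (insert e S)) = ?r (insert e S)" using eq1 eq2 by simp
        thus ?thesis using lhs True by (simp add: memT)
      next
        case False
        have ri: "r (insert z S) = r S + 1" by (rule r_ins_notin[OF SE zE False])
        have ci: "c (insert z (c S)) = c (insert z S)" by (rule cl_ins_cl[OF SE zE])
        have "?r (insert z (insert e S)) = ?r (insert e S) \<longleftrightarrow> (c S \<notin> M \<and> c (insert z S) \<in> M)"
          unfolding eq1 eq2 using ri by auto
        thus ?thesis unfolding lhs using False zE ci ze by (simp add: memT[of z "c S"])
      qed
    qed
  qed
qed

lemma ext_cl0: assumes eE: "e \<notin> E" and Gf: "flat E r G0"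
  shows "cl (insert e E) (ext_rank E r M e) G0 \<union> {e} = insert e G0"
proof -
  have GE: "G0 \<subseteq> E" by (rule flatE[OF Gf])
  have "cl (insert e E) (ext_rank E r M e) G0 \<subseteq> insert e G0"
  proof
    fix z assume z: "z \<in> cl (insert e E) (ext_rank E r M e) G0"
    show "z \<in> insert e G0"
    proof (cases "z = e")
      case False
      hence zE: "z \<in> E" using z by (auto simp: mem_cl)
      have "ext_rank E r M e (insert z G0) = ext_rank E r M e G0" using z by (simp add: mem_cl)
      hence "r (insert z G0) = r G0" using er1[OF eE] GE zE by simp
      hence "z \<in> c G0" using zE by (simp add: cl_def)
      thus ?thesis using flatC[OF Gf] by simp
    qed simp
  qed
  moreover have "G0 \<subseteq> cl (insert e E) (ext_rank E r M e) G0"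
    using GE by (auto simp: mem_cl insert_absorb)
  ultimately show ?thesis by auto
qed

lemma contract_eq: assumes eE: "e \<notin> E"
  shows "contract_building (insert e E) (ext_rank E r M e) e (ext_building E r M e G) = T ` G"
proof -
  let ?c = "cl (insert e E) (ext_rank E r M e)"
  have ce: "?c {e} = {e}" using ext_cl[OF eE, of "{}"] cl_empty T_empty by simp
  have cG: "?c (?c G0 \<union> {e}) = insert e (T G0)" if "G0 \<in> G" for G0
  proof -
    have Gf: "flat E r G0" by (rule G_flat[OF that])
    have "?c (?c G0 \<union> {e}) = ?c (insert e G0)" using ext_cl0[OF eE Gf] by simp
    also have "\<dots> = insert e (T (c G0))" by (rule ext_cl[OF eE flatE[OF Gf]])
    finally show ?thesis using flatC[OF Gf] by simp
  qed
  have eT: "e \<notin> T G0" if "G0 \<in> G" for G0 using T_sub[OF G_flat[OF that]] eE by auto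
  show ?thesis
  proof (rule set_eqI)
    fix X
    show "X \<in> contract_building (insert e E) (ext_rank E r M e) e (ext_building E r M e G) \<longleftrightarrow> X \<in> T ` G"
    proof
      assume "X \<in> contract_building (insert e E) (ext_rank E r M e) e (ext_building E r M e G)"
      then obtain H G' where X: "X = H - {e}" "G' \<in> ?c ` G \<union> {{e}}" "H = ?c (G' \<union> {e})" "H \<noteq> ?c {e}"
        unfolding contract_building_def ext_building_def by blast
      show "X \<in> T ` G"
      proof (cases "G' = {e}")
        case True thus ?thesis using X by simp
      next
        case False
        then obtain G0 where G0: "G0 \<in> G" "G' = ?c G0" using X(2) by auto
        hence "H = insert e (T G0)" using X(3) cG by simp
        hence "X = T G0" using X(1) eT[OF G0(1)] by auto
        thus ?thesis using G0(1) by simp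
      qed
    next
      assume "X \<in> T ` G"
      then obtain G0 where G0: "G0 \<in> G" "X = T G0" by auto
      have "G0 \<noteq> {}" by (rule G_ne[OF G0(1)])
      hence "T G0 \<noteq> {}" using T_incl[of G0] by auto
      hence ne: "insert e (T G0) \<noteq> ?c {e}" using ce eT[OF G0(1)] by auto
      have "?c G0 \<in> ?c ` G \<union> {{e}}" using G0(1) by simp
      moreover have "insert e (T G0) = ?c (?c G0 \<union> {e})" using cG[OF G0(1)] by simp
      moreover have "X = insert e (T G0) - {e}" using G0(2) eT[OF G0(1)] by simp
      ultimately show "X \<in> contract_building (insert e E) (ext_rank E r M e) e (ext_building E r M e G)"
        unfolding contract_building_def ext_building_def using ne by blast
    qed
  qed
qed

end

theorem lemma2p33:
  fixes E :: "'a set" and r :: "'a set \<Rightarrow> nat" and \<G> \<M> :: "'a set set" and e :: 'a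
  assumes "matroid E r" and "loopless E r"
    and "building_set E r \<G>"
    and "modular_cut E r \<M>" and "atom_free E r \<M>" and "compatible \<G> \<M>"
    and "e \<notin> E"
  shows "trunc_building E r \<M> \<G> =
           contract_building (insert e E) (ext_rank E r \<M> e) e (ext_building E r \<M> e \<G>)
         \<and> building_set E (trunc_rank E r \<M>) (trunc_building E r \<M> \<G>)"
proof -
  interpret main E r \<G> \<M>
    by (unfold_locales) (use assms in auto)
  show ?thesis using part1 contract_eq[OF assms(7)] part2 by simp
qed



end
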